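(* Let $N\ge1$, $n\ge1$, let $b$ be a positive integer, and let $\omega_*$, $\langle\cdot,\cdot\rangle_{b,N}$ and $\langle\!\langle\cdot,\cdot\rangle\!\rangle_{b,N}$ be as in the context. Then for all $f,g\in F_{N,n}$, $$\langle f,g\rangle_{b,N}=\langle\!\langle\omega_*(f),\omega_*(g)\rangle\!\rangle_{b,N}.$$
   Context: For $k\in\mathbb Z$, $\underline{k}\in\{1,\dots,N\}$, $\overline{k}\in\mathbb Z$ unique with $k=\underline{k}-N\overline{k}$. $V=\mathbb C^N$ with basis $v_1,\dots,v_N$. $K_{ij}$ swaps $z_i,z_j$, $P_{ij}$ swaps factors $i,j$ of $V^{\otimes n}$; $F_{N,n}=\{f\in\mathbb C[z_1^{\pm1},\dots,z_n^{\pm1}]\otimes V^{\otimes n}:K_{ij}f=-P_{ij}f\}$ with basis $\hat u_k=\sum_{w\in S_n}\mathrm{sign}(w)z_1^{\overline{k_{w(1)}}}\cdots z_n^{\overline{k_{w(n)}}}\otimes v_{\underline{k_{w(1)}}}\otimes\cdots\otimes v_{\underline{k_{w(n)}}}$, $k_1>\dots>k_n$. $\hat a_k=\sum_{w\in S_n}\mathrm{sign}(w)x_{w(1)}^{k_1}\cdots x_{w(n)}^{k_n}$; $\omega_*$ is the linear isomorphism from $F_{N,n}$ onto skew-symmetric Laurent polynomials in $x$ with $\omega_*(\hat u_k)=\hat a_k$ ($k_1>\dots>k_n$). Scalar products. On $\mathbb C[z^{\pm1}]\otimes V^{\otimes n}$: $\langle f\otimes u,g\otimes v\rangle'_{b,N}=\frac1{n!}\prod_j\oint\frac{dw_j}{2\pi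 iw_j}\prod_{i\ne j}(1-w_iw_j^{-1})^b\,\bar f(w^{-1})g(w)\cdot\langle u,v\rangle_N$ (unit circles; $\bar f$ has conjugated coefficients; $\langle\cdot,\cdot\rangle_N$ makes the tensor monomials $v_{a_1}\otimes\cdots\otimes v_{a_n}$ orthonormal), extended sesquilinearly; $\langle\cdot,\cdot\rangle_{b,N}$ is its restriction to $F_{N,n}$. For Laurent polynomials $f,g$ in $x$: $f^*(x)=\bar f(x_1^{-1},\dots,x_n^{-1})$, $[h]_1$ is the constant term, $\nabla(b,N)=\prod_{1\le i\ne j\le n}(1-x_i^Nx_j^{-N})^b$, and $\langle\!\langle f,g\rangle\!\rangle_{b,N}=\frac1{n!}[\nabla(b,N)f^*g]_1$. *)

theory Defs
  imports "HOL-Complex_Analysis.Complex_Analysis" "HOL-Library.Poly_Mapping"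
    "HOL-Combinatorics.Combinatorics"
begin

text \<open>Laurent polynomials (in variables indexed by nat, 0-based) with complex
  coefficients: finitely supported maps from integer exponent vectors to coefficients.\<close>
type_synonym lpoly = "(nat \<Rightarrow>\<^sub>0 int) \<Rightarrow>\<^sub>0 complex"

text \<open>An element of C[z^{\<pm>1}] \<otimes> V^{\<otimes>n}, written as sum over index tuples a of
  f_a \<otimes> v_{a_1} \<otimes> ... \<otimes> v_{a_n}; we store the map a \<mapsto> f_a.\<close>
type_synonym tens = "nat list \<Rightarrow> lpoly"

definition lmono :: "(nat \<Rightarrow>\<^sub>0 int) \<Rightarrow> lpoly" where
  "lmono m = Poly_Mapping.single m 1"

definition lconst :: "complex \<Rightarrow> lpoly" where
  "lconst c = Poly_Mapping.single 0 c"

definition xpow :: "nat \<Rightarrow> int \<Rightarrow> lpoly" where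
  "xpow j e = lmono (Poly_Mapping.single j e)"

definition lvars_in :: "nat \<Rightarrow> lpoly \<Rightarrow> bool" where
  "lvars_in n p \<longleftrightarrow> (\<forall>m\<in>Poly_Mapping.keys p. Poly_Mapping.keys m \<subseteq> {0..<n})"

definition idx_tuples :: "nat \<Rightarrow> nat \<Rightarrow> nat list set" where
  "idx_tuples N n = {a. length a = n \<and> set a \<subseteq> {1..N}}"

definition tens_space :: "nat \<Rightarrow> nat \<Rightarrow> tens \<Rightarrow> bool" where
  "tens_space N n f \<longleftrightarrow> (\<forall>a. a \<notin> idx_tuples N n \<longrightarrow> f a = 0) \<and> (\<forall>a. lvars_in n (f a))"

definition Kop :: "nat \<Rightarrow> nat \<Rightarrow> tens \<Rightarrow> tens" where
  "Kop i j f = (\<lambda>a. Poly_Mapping.map_key (Poly_Mapping.map_key (Transposition.transpose i j)) (f a))"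

definition Pop :: "nat \<Rightarrow> nat \<Rightarrow> tens \<Rightarrow> tens" where
  "Pop i j f = (\<lambda>a. f (a[i := a ! j, j := a ! i]))"

definition F_space :: "nat \<Rightarrow> nat \<Rightarrow> tens \<Rightarrow> bool" where
  "F_space N n f \<longleftrightarrow> tens_space N n f \<and>
     (\<forall>i<n. \<forall>j<n. i \<noteq> j \<longrightarrow> Kop i j f = - Pop i j f)"

text \<open>underline k \<in> {1..N} and overline k with k = underline k - N * overline k\<close>
definition ul :: "nat \<Rightarrow> int \<Rightarrow> int" where
  "ul N k = (k - 1) mod int N + 1"

definition ol :: "nat \<Rightarrow> int \<Rightarrow> int" where
  "ol N k = (ul N k - k) div int N"

definition uhat :: "nat \<Rightarrow> nat \<Rightarrow> int list \<Rightarrow> tens" where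
  "uhat N n k = (\<lambda>a. \<Sum>w | w permutes {0..<n}.
      of_int (sign w) *
      (if a = map (\<lambda>i. nat (ul N (k ! w i))) [0..<n]
       then lmono (\<Sum>i<n. Poly_Mapping.single i (ol N (k ! w i))) else 0))"

definition ahat :: "nat \<Rightarrow> int list \<Rightarrow> lpoly" where
  "ahat n k = (\<Sum>w | w permutes {0..<n}. of_int (sign w) * (\<Prod>i<n. xpow (w i) (k ! i)))"

definition peval :: "lpoly \<Rightarrow> (nat \<Rightarrow> complex) \<Rightarrow> complex" where
  "peval p w = (\<Sum>m\<in>Poly_Mapping.keys p. Poly_Mapping.lookup p m * (\<Prod>j\<in>Poly_Mapping.keys m. w j powi Poly_Mapping.lookup m j))"

definition conjc :: "lpoly \<Rightarrow> lpoly" where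
  "conjc p = (\<Sum>m\<in>Poly_Mapping.keys p. Poly_Mapping.single m (cnj (Poly_Mapping.lookup p m)))"

definition pstar :: "lpoly \<Rightarrow> lpoly" where
  "pstar p = (\<Sum>m\<in>Poly_Mapping.keys p. Poly_Mapping.single (- m) (cnj (Poly_Mapping.lookup p m)))"

fun torus_int :: "nat \<Rightarrow> ((nat \<Rightarrow> complex) \<Rightarrow> complex) \<Rightarrow> complex" where
  "torus_int 0 F = F (\<lambda>_. 1)"
| "torus_int (Suc n) F = torus_int n (\<lambda>w.
      contour_integral (circlepath 0 1) (\<lambda>u. F (w(n := u)) / (2 * pi * \<i> * u)))"

text \<open>\<langle>f,g\<rangle>'_{b,N}, extended sesquilinearly using orthonormality of the tensor basis\<close>
definition ip' :: "nat \<Rightarrow> nat \<Rightarrow> nat \<Rightarrow> tens \<Rightarrow> tens \<Rightarrow> complex" where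
  "ip' N b n f g = (1 / fact n) * (\<Sum>a\<in>idx_tuples N n.
     torus_int n (\<lambda>w. (\<Prod>i<n. \<Prod>j\<in>{0..<n} - {i}. (1 - w i / w j) ^ b)
        * peval (conjc (f a)) (\<lambda>j. inverse (w j)) * peval (g a) w))"

definition Nabla :: "nat \<Rightarrow> nat \<Rightarrow> nat \<Rightarrow> lpoly" where
  "Nabla N b n = (\<Prod>i<n. \<Prod>j\<in>{0..<n} - {i}. (1 - xpow i (int N) * xpow j (- int N)) ^ b)"

definition ipp :: "nat \<Rightarrow> nat \<Rightarrow> nat \<Rightarrow> lpoly \<Rightarrow> lpoly \<Rightarrow> complex" where
  "ipp N b n p q = (1 / fact n) * Poly_Mapping.lookup (Nabla N b n * pstar p * q) 0"

end

theory Submission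
  imports Defs
begin

lemma pm_decomp: "(p::('a \<Rightarrow>\<^sub>0 'b::comm_monoid_add)) = (\<Sum>m\<in>Poly_Mapping.keys p. Poly_Mapping.single m (Poly_Mapping.lookup p m))"
proof (rule poly_mapping_eqI)
  fix k
  show "Poly_Mapping.lookup p k = Poly_Mapping.lookup (\<Sum>m\<in>Poly_Mapping.keys p. Poly_Mapping.single m (Poly_Mapping.lookup p m)) k"
    by (cases "k \<in> Poly_Mapping.keys p") (auto simp: lookup_sum lookup_single when_def in_keys_iff)
qed

lemma add_ext_zero:
  fixes \<Phi> :: "'a::comm_monoid_add \<Rightarrow> 'b::ab_group_add"
  assumes add: "\<And>p q. \<Phi> (p + q) = \<Phi> p + \<Phi> q"
  shows "\<Phi> 0 = 0"
  using add[of 0 0] by simp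

lemma add_ext_sum:
  fixes \<Phi> :: "'a::comm_monoid_add \<Rightarrow> 'b::ab_group_add"
  assumes add: "\<And>p q. \<Phi> (p + q) = \<Phi> p + \<Phi> q"
  shows "\<Phi> (sum f S) = (\<Sum>x\<in>S. \<Phi> (f x))"
proof (induction S rule: infinite_finite_induct)
  case (infinite A) then show ?case using add_ext_zero[OF add] by simp
next
  case empty then show ?case using add_ext_zero[OF add] by simp
next
  case (insert x F) then show ?case by (simp add: add)
qed

lemma mult_ext:
  fixes \<Phi> :: "lpoly \<Rightarrow> 'b::comm_ring_1"
  assumes add: "\<And>p q. \<Phi> (p + q) = \<Phi> p + \<Phi> q"
    and sm: "\<And>m c m' d. \<Phi> (Poly_Mapping.single m c * Poly_Mapping.single m' d) = \<Phi> (Poly_Mapping.single m c) * \<Phi> (Poly_Mapping.single m' d)"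
  shows "\<Phi> (p * q) = \<Phi> p * \<Phi> q"
proof -
  let ?P = "\<lambda>m. Poly_Mapping.single m (Poly_Mapping.lookup p m)"
  let ?Q = "\<lambda>m. Poly_Mapping.single m (Poly_Mapping.lookup q m)"
  have "p * q = (\<Sum>m\<in>Poly_Mapping.keys p. ?P m) * (\<Sum>m\<in>Poly_Mapping.keys q. ?Q m)"
    using pm_decomp[of p] pm_decomp[of q] by simp
  also have "\<dots> = (\<Sum>m\<in>Poly_Mapping.keys p. \<Sum>m'\<in>Poly_Mapping.keys q. ?P m * ?Q m')"
    by (simp add: sum_product)
  finally have "\<Phi> (p * q) = (\<Sum>m\<in>Poly_Mapping.keys p. \<Sum>m'\<in>Poly_Mapping.keys q. \<Phi> (?P m) * \<Phi> (?Q m'))"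
    by (simp add: add_ext_sum[OF add] sm)
  also have "\<dots> = (\<Sum>m\<in>Poly_Mapping.keys p. \<Phi> (?P m)) * (\<Sum>m\<in>Poly_Mapping.keys q. \<Phi> (?Q m))"
    by (simp add: sum_product)
  also have "\<dots> = \<Phi> p * \<Phi> q"
  proof -
    have "\<Phi> (\<Sum>m\<in>Poly_Mapping.keys p. ?P m) = (\<Sum>m\<in>Poly_Mapping.keys p. \<Phi> (?P m))"
      by (rule add_ext_sum[OF add])
    moreover have "\<Phi> (\<Sum>m\<in>Poly_Mapping.keys q. ?Q m) = (\<Sum>m\<in>Poly_Mapping.keys q. \<Phi> (?Q m))"
      by (rule add_ext_sum[OF add])
    ultimately show ?thesis using pm_decomp[of p, symmetric] pm_decomp[of q, symmetric] by simp
  qed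
  finally show ?thesis .
qed

lemma add_ext_eq:
  fixes \<Phi> \<Psi> :: "lpoly \<Rightarrow> 'b::ab_group_add"
  assumes "\<And>p q. \<Phi> (p + q) = \<Phi> p + \<Phi> q" "\<And>p q. \<Psi> (p + q) = \<Psi> p + \<Psi> q"
    and "\<And>m c. \<Phi> (Poly_Mapping.single m c) = \<Psi> (Poly_Mapping.single m c)"
  shows "\<Phi> p = \<Psi> p"
proof -
  have "\<Phi> (\<Sum>m\<in>Poly_Mapping.keys p. Poly_Mapping.single m (Poly_Mapping.lookup p m)) = \<Psi> (\<Sum>m\<in>Poly_Mapping.keys p. Poly_Mapping.single m (Poly_Mapping.lookup p m))"
    by (simp add: add_ext_sum[of \<Phi>, OF assms(1)] add_ext_sum[of \<Psi>, OF assms(2)] assms(3))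
  then show ?thesis using pm_decomp[of p, symmetric] by simp
qed

definition push :: "((nat \<Rightarrow>\<^sub>0 int) \<Rightarrow> (nat \<Rightarrow>\<^sub>0 int)) \<Rightarrow> (complex \<Rightarrow> complex) \<Rightarrow> lpoly \<Rightarrow> lpoly" where
  "push h \<phi> p = (\<Sum>m\<in>Poly_Mapping.keys p. Poly_Mapping.single (h m) (\<phi> (Poly_Mapping.lookup p m)))"

lemma push_superset:
  assumes "finite S" "Poly_Mapping.keys p \<subseteq> S" "\<phi> 0 = 0"
  shows "push h \<phi> p = (\<Sum>m\<in>S. Poly_Mapping.single (h m) (\<phi> (Poly_Mapping.lookup p m)))"
  unfolding push_def
  by (rule sum.mono_neutral_left) (use assms in \<open>auto simp: in_keys_iff\<close>)

lemma push_add: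
  assumes "\<And>x y. \<phi> (x + y) = \<phi> x + \<phi> y"
  shows "push h \<phi> (p + q) = push h \<phi> p + push h \<phi> q"
proof -
  have z: "\<phi> 0 = 0" using assms[of 0 0] by simp
  let ?S = "Poly_Mapping.keys p \<union> Poly_Mapping.keys q"
  have "push h \<phi> (p + q) = (\<Sum>m\<in>?S. Poly_Mapping.single (h m) (\<phi> (Poly_Mapping.lookup (p+q) m)))"
    by (rule push_superset) (auto simp: z keys_add)
  also have "\<dots> = (\<Sum>m\<in>?S. Poly_Mapping.single (h m) (\<phi> (Poly_Mapping.lookup p m))) + (\<Sum>m\<in>?S. Poly_Mapping.single (h m) (\<phi> (Poly_Mapping.lookup q m)))"
    by (simp add: lookup_add assms single_add sum.distrib)
  also have "\<dots> = push h \<phi> p + push h \<phi> q"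
    by (subst (1 2) push_superset[where S="?S"]) (auto simp: z)
  finally show ?thesis .
qed

lemma push_single:
  assumes "\<phi> 0 = 0"
  shows "push h \<phi> (Poly_Mapping.single m c) = Poly_Mapping.single (h m) (\<phi> c)"
  using assms by (cases "c = 0") (auto simp: push_def)

lemma push_mult:
  assumes "\<And>x y. \<phi> (x + y) = \<phi> x + \<phi> y" "\<And>x y. \<phi> (x * y) = \<phi> x * \<phi> y"
    and "\<And>x y. h (x + y) = h x + h y"
  shows "push h \<phi> (p * q) = push h \<phi> p * push h \<phi> q"
proof -
  have z: "\<phi> 0 = 0" using assms(1)[of 0 0] by simp
  show ?thesis
    by (rule mult_ext) (simp_all add: push_add assms push_single z mult_single)
qed

definition mon :: "(nat \<Rightarrow>\<^sub>0 int) \<Rightarrow> (nat \<Rightarrow> complex) \<Rightarrow> complex" where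
  "mon m w = (\<Prod>j\<in>Poly_Mapping.keys m. w j powi Poly_Mapping.lookup m j)"

lemma peval_mon: "peval p w = (\<Sum>m\<in>Poly_Mapping.keys p. Poly_Mapping.lookup p m * mon m w)"
  by (simp add: peval_def mon_def)

lemma peval_superset:
  assumes "finite S" "Poly_Mapping.keys p \<subseteq> S"
  shows "peval p w = (\<Sum>m\<in>S. Poly_Mapping.lookup p m * mon m w)"
  unfolding peval_mon
  by (rule sum.mono_neutral_left) (use assms in \<open>auto simp: in_keys_iff\<close>)

lemma mon_superset:
  assumes "finite S" "Poly_Mapping.keys m \<subseteq> S"
  shows "mon m w = (\<Prod>j\<in>S. w j powi Poly_Mapping.lookup m j)"
  unfolding mon_def
  by (rule prod.mono_neutral_left) (use assms in \<open>auto simp: in_keys_iff\<close>)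

lemma peval_add: "peval (p + q) w = peval p w + peval q w"
proof -
  let ?S = "Poly_Mapping.keys p \<union> Poly_Mapping.keys q"
  have "peval (p + q) w = (\<Sum>m\<in>?S. Poly_Mapping.lookup (p+q) m * mon m w)"
    by (rule peval_superset) (auto simp: keys_add)
  also have "\<dots> = (\<Sum>m\<in>?S. Poly_Mapping.lookup p m * mon m w) + (\<Sum>m\<in>?S. Poly_Mapping.lookup q m * mon m w)"
    by (simp add: lookup_add sum.distrib distrib_right)
  also have "\<dots> = peval p w + peval q w"
    by (subst (1 2) peval_superset[where S="?S"]) auto
  finally show ?thesis .
qed

lemma peval_single: "peval (Poly_Mapping.single m c) w = c * mon m w"
  by (cases "c = 0") (auto simp: peval_mon)

lemma mon_add:
  assumes "\<forall>j. w j \<noteq> 0"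
  shows "mon (m + m') w = mon m w * mon m' w"
proof -
  let ?S = "Poly_Mapping.keys m \<union> Poly_Mapping.keys m'"
  have "mon (m + m') w = (\<Prod>j\<in>?S. w j powi Poly_Mapping.lookup (m+m') j)"
    by (rule mon_superset) (auto simp: keys_add)
  also have "\<dots> = (\<Prod>j\<in>?S. w j powi Poly_Mapping.lookup m j) * (\<Prod>j\<in>?S. w j powi Poly_Mapping.lookup m' j)"
    by (simp add: lookup_add power_int_add assms prod.distrib)
  also have "\<dots> = mon m w * mon m' w"
    by (subst (1 2) mon_superset[where S="?S"]) auto
  finally show ?thesis .
qed

lemma mon_zero[simp]: "mon 0 w = 1"
  by (simp add: mon_def)

lemma peval_mult:
  assumes "\<forall>j. w j \<noteq> 0"
  shows "peval (p * q) w = peval p w * peval q w"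
  by (rule mult_ext[where \<Phi>="\<lambda>p. peval p w"]) (simp_all add: peval_add peval_single mult_single mon_add assms)

lemma peval_zero[simp]: "peval 0 w = 0"
  by (simp add: peval_def)

lemma peval_uminus: "peval (- p) w = - peval p w"
proof -
  have "peval p w + peval (-p) w = 0" using peval_add[of p "-p" w] by simp
  then have "- peval p w = peval (-p) w" by (simp add: neg_eq_iff_add_eq_0)
  then show ?thesis by simp
qed

lemma peval_diff: "peval (p - q) w = peval p w - peval q w"
  using peval_add[of p "-q" w] peval_uminus[of q w] by simp

lemma peval_one[simp]: "peval 1 w = 1"
proof -
  have "(1::lpoly) = Poly_Mapping.single 0 1" by simp
  then show ?thesis by (metis peval_single mon_zero mult_1)
qed

lemma peval_lconst[simp]: "peval (lconst c) w = c"
  by (simp add: lconst_def peval_single)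

lemma mon_single: "mon (Poly_Mapping.single j e) w = w j powi e"
  by (cases "e = 0") (auto simp: mon_def)

lemma peval_xpow[simp]: "peval (xpow j e) w = w j powi e"
  by (simp add: xpow_def lmono_def peval_single mon_single)

lemma peval_prod:
  assumes "\<forall>j. w j \<noteq> 0"
  shows "peval (\<Prod>i\<in>S. F i) w = (\<Prod>i\<in>S. peval (F i) w)"
  by (induction S rule: infinite_finite_induct) (auto simp: peval_mult assms)

lemma peval_power:
  assumes "\<forall>j. w j \<noteq> 0"
  shows "peval (p ^ k) w = peval p w ^ k"
  by (induction k) (auto simp: peval_mult assms)

lemma peval_sum: "peval (\<Sum>i\<in>S. F i) w = (\<Sum>i\<in>S. peval (F i) w)"
  by (rule add_ext_sum[where \<Phi>="\<lambda>p. peval p w"]) (simp add: peval_add)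

lemma peval_push: "peval (push h \<phi> p) w = (\<Sum>m\<in>Poly_Mapping.keys p. \<phi> (Poly_Mapping.lookup p m) * mon (h m) w)"
  by (simp add: push_def peval_sum peval_single)

lemma conjc_push: "conjc = push (\<lambda>m. m) cnj"
  by (simp add: fun_eq_iff conjc_def push_def)

lemma pstar_push: "pstar = push uminus cnj"
  by (simp add: fun_eq_iff pstar_def push_def)

lemma mon_inv: "mon m (\<lambda>j. inverse (w j)) = mon (- m) w"
  by (simp add: mon_def power_int_inverse power_int_minus)

lemma peval_conjc_inv: "peval (conjc p) (\<lambda>j. inverse (w j)) = peval (pstar p) w"
  by (simp add: conjc_push pstar_push peval_push mon_inv)

lemma torus_Suc: "torus_int (Suc n) F = torus_int n (\<lambda>w. contour_integral (circlepath 0 1) (\<lambda>u. F (w(n := u)) / (2 * complex_of_real pi * \<i> * u)))"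
  by simp

lemma circ_int:
  "((\<lambda>u. u powi k / (2 * complex_of_real pi * \<i> * u)) has_contour_integral (if k = 0 then 1 else 0)) (circlepath 0 1)"
proof (cases "k = 0")
  case True
  have "((\<lambda>u. (1 / (2 * complex_of_real pi * \<i>)) / (u - 0)) has_contour_integral (2 * complex_of_real pi * \<i> * (1 / (2 * complex_of_real pi * \<i>)))) (circlepath 0 1)"
    by (rule Cauchy_integral_circlepath_simple) auto
  then have "((\<lambda>u. (1 / (2 * complex_of_real pi * \<i>)) / (u - 0)) has_contour_integral 1) (circlepath 0 1)"
    by simp
  then show ?thesis using True
    by (rule_tac has_contour_integral_eq) (auto simp: field_simps)
next
  case False
  let ?F = "\<lambda>u. u powi k / (of_int k * (2 * complex_of_real pi * \<i>))"
  have d: "(?F has_field_derivative u powi k / (2 * complex_of_real pi * \<i> * u)) (at u within (- {0}))"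
    if "u \<in> - {0}" for u
  proof -
    have "((\<lambda>u. u powi k) has_field_derivative (of_int k * u powi (k - 1) * 1)) (at u within (- {0}))"
      by (rule DERIV_power_int) (use that in \<open>auto intro: derivative_eq_intros\<close>)
    then have "(?F has_field_derivative (of_int k * u powi (k - 1) * 1) / (of_int k * (2 * complex_of_real pi * \<i>))) (at u within (- {0}))"
      by (rule DERIV_cdivide)
    moreover have "(of_int k * u powi (k - 1) * 1) / (of_int k * (2 * complex_of_real pi * \<i>)) = u powi k / (2 * complex_of_real pi * \<i> * u)"
      using False that by (simp add: power_int_diff field_simps)
    ultimately show ?thesis by simp
  qed
  have "((\<lambda>u. u powi k / (2 * complex_of_real pi * \<i> * u)) has_contour_integral (?F (pathfinish (circlepath 0 1)) - ?F (pathstart (circlepath 0 1)))) (circlepath 0 1)"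
    by (rule contour_integral_primitive[OF d]) (auto simp: path_image_circlepath_nonneg)
  then show ?thesis using False by simp
qed

lemma torus_cong:
  assumes "\<And>w. (\<forall>j. w j \<noteq> 0) \<Longrightarrow> F w = G w"
  shows "torus_int n F = torus_int n G"
  using assms
proof (induction n arbitrary: F G)
  case 0
  then show ?case by simp
next
  case (Suc n)
  have inner: "contour_integral (circlepath 0 1) (\<lambda>u. F (w(n := u)) / (2 * complex_of_real pi * \<i> * u)) =
          contour_integral (circlepath 0 1) (\<lambda>u. G (w(n := u)) / (2 * complex_of_real pi * \<i> * u))"
    if w: "\<forall>j. w j \<noteq> 0" for w
  proof (rule contour_integral_eq)
    fix u assume "u \<in> path_image (circlepath 0 1)"
    then have "u \<noteq> 0" by (auto simp: path_image_circlepath_nonneg)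
    then have nz: "\<forall>j. (w(n := u)) j \<noteq> 0" using w by auto
    have "F (w(n := u)) = G (w(n := u))" by (rule Suc.prems[OF nz])
    then show "F (w(n := u)) / (2 * complex_of_real pi * \<i> * u) = G (w(n := u)) / (2 * complex_of_real pi * \<i> * u)"
      by simp
  qed
  show ?case unfolding torus_Suc
    by (rule Suc.IH) (rule inner)
qed

definition mon' :: "nat \<Rightarrow> (nat \<Rightarrow>\<^sub>0 int) \<Rightarrow> (nat \<Rightarrow> complex) \<Rightarrow> complex" where
  "mon' n m w = (\<Prod>j\<in>Poly_Mapping.keys m - {n}. w j powi Poly_Mapping.lookup m j)"

lemma mon_upd: "mon m (w(n := u)) = u powi (Poly_Mapping.lookup m n) * mon' n m w"
proof (cases "n \<in> Poly_Mapping.keys m")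
  case True
  then show ?thesis unfolding mon_def mon'_def
    by (simp add: prod.remove[OF finite_keys True])
next
  case False
  then show ?thesis unfolding mon_def mon'_def
    by (auto simp: in_keys_iff intro!: prod.cong)
qed

lemma torus_peval:
  assumes "lvars_in n P"
  shows "torus_int n (peval P) = Poly_Mapping.lookup P 0"
  using assms
proof (induction n arbitrary: P)
  case 0
  then have k: "Poly_Mapping.keys P \<subseteq> {0}"
    by (auto simp: lvars_in_def)
  have "peval P (\<lambda>_. 1) = (\<Sum>m\<in>{0}. Poly_Mapping.lookup P m * mon m (\<lambda>_. 1))"
    by (rule peval_superset) (use k in auto)
  then show ?case by simp
next
  case (Suc n)
  define S where "S = {m\<in>Poly_Mapping.keys P. Poly_Mapping.lookup m n = 0}"
  define R where "R = (\<Sum>m\<in>S. Poly_Mapping.single m (Poly_Mapping.lookup P m))"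
  have finS: "finite S" by (simp add: S_def)
  have kR: "Poly_Mapping.keys R \<subseteq> S"
    unfolding R_def using keys_sum[of "\<lambda>m. Poly_Mapping.single m (Poly_Mapping.lookup P m)" S]
    by auto
  have lvR: "lvars_in n R"
  proof -
    have "Poly_Mapping.keys m \<subseteq> {0..<n}" if "m \<in> S" for m
    proof -
      have "Poly_Mapping.keys m \<subseteq> {0..<Suc n}" using that Suc.prems by (auto simp: S_def lvars_in_def)
      moreover have "n \<notin> Poly_Mapping.keys m" using that by (auto simp: S_def in_keys_iff)
      ultimately show ?thesis by (auto simp: less_Suc_eq)
    qed
    then show ?thesis using kR by (auto simp: lvars_in_def)
  qed
  have lR0: "Poly_Mapping.lookup R 0 = Poly_Mapping.lookup P 0"
  proof (cases "0 \<in> Poly_Mapping.keys P")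
    case True
    then have "0 \<in> S" by (simp add: S_def)
    then show ?thesis unfolding R_def
      by (simp add: lookup_sum lookup_single when_def finS)
  next
    case False
    then have "0 \<notin> S" by (simp add: S_def)
    then have "Poly_Mapping.lookup R 0 = 0" unfolding R_def
      by (auto simp: lookup_sum lookup_single when_def intro!: sum.neutral)
    then show ?thesis using False by (simp add: in_keys_iff)
  qed
  have inner: "contour_integral (circlepath 0 1) (\<lambda>u. peval P (w(n := u)) / (2 * complex_of_real pi * \<i> * u)) = peval R w" for w
  proof -
    have e: "peval P (w(n := u)) / (2 * complex_of_real pi * \<i> * u) =
      (\<Sum>m\<in>Poly_Mapping.keys P. (Poly_Mapping.lookup P m * mon' n m w) * (u powi (Poly_Mapping.lookup m n) / (2 * complex_of_real pi * \<i> * u)))" for u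
      unfolding peval_mon mon_upd sum_divide_distrib by (intro sum.cong refl) (simp add: mult_ac)
    have "((\<lambda>u. peval P (w(n := u)) / (2 * complex_of_real pi * \<i> * u)) has_contour_integral
       (\<Sum>m\<in>Poly_Mapping.keys P. (Poly_Mapping.lookup P m * mon' n m w) * (if Poly_Mapping.lookup m n = 0 then 1 else 0))) (circlepath 0 1)"
      unfolding e
      by (rule has_contour_integral_sum) (simp, rule has_contour_integral_lmul[OF circ_int])
    then have "contour_integral (circlepath 0 1) (\<lambda>u. peval P (w(n := u)) / (2 * complex_of_real pi * \<i> * u)) =
       (\<Sum>m\<in>Poly_Mapping.keys P. (Poly_Mapping.lookup P m * mon' n m w) * (if Poly_Mapping.lookup m n = 0 then 1 else 0))"
      by (rule contour_integral_unique)
    also have "\<dots> = (\<Sum>m\<in>S. Poly_Mapping.lookup P m * mon' n m w)"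
      unfolding S_def by (simp add: sum.inter_filter[symmetric] if_distrib cong: if_cong)
    also have "\<dots> = (\<Sum>m\<in>S. Poly_Mapping.lookup P m * mon m w)"
    proof (rule sum.cong)
      fix m assume "m \<in> S"
      then have "n \<notin> Poly_Mapping.keys m" by (auto simp: S_def in_keys_iff)
      then show "Poly_Mapping.lookup P m * mon' n m w = Poly_Mapping.lookup P m * mon m w"
        by (simp add: mon_def mon'_def)
    qed simp
    also have "\<dots> = peval R w"
      unfolding R_def by (simp add: peval_sum peval_single)
    finally show ?thesis .
  qed
  have "torus_int (Suc n) (peval P) = torus_int n (peval R)"
    unfolding torus_Suc inner by simp
  also have "\<dots> = Poly_Mapping.lookup P 0"
    using Suc.IH[OF lvR] lR0 by simp
  finally show ?case .
qed

lemma lvars_in_add: "lvars_in n p \<Longrightarrow> lvars_in n q \<Longrightarrow> lvars_in n (p + q)"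
  using keys_add[of p q] by (auto simp: lvars_in_def)

lemma lvars_in_diff: "lvars_in n p \<Longrightarrow> lvars_in n q \<Longrightarrow> lvars_in n (p - q)"
  using keys_diff[of p q] by (auto simp: lvars_in_def)

lemma lvars_in_mult: "lvars_in n p \<Longrightarrow> lvars_in n q \<Longrightarrow> lvars_in n (p * q)"
proof -
  assume a: "lvars_in n p" "lvars_in n q"
  show ?thesis unfolding lvars_in_def
  proof
    fix m assume "m \<in> Poly_Mapping.keys (p * q)"
    then obtain x y where "m = x + y" "x \<in> Poly_Mapping.keys p" "y \<in> Poly_Mapping.keys q"
      using keys_mult[of p q] by blast
    then show "Poly_Mapping.keys m \<subseteq> {0..<n}"
      using a keys_add[of x y] unfolding lvars_in_def by blast
  qed
qed

lemma lvars_in_one: "lvars_in n 1"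
  by (simp add: lvars_in_def)

lemma lvars_in_xpow: "i < n \<Longrightarrow> lvars_in n (xpow i e)"
  by (simp add: lvars_in_def xpow_def lmono_def)

lemma lvars_in_power: "lvars_in n p \<Longrightarrow> lvars_in n (p ^ k)"
  by (induction k) (auto simp: lvars_in_one lvars_in_mult)

lemma lvars_in_prod: "(\<And>i. i \<in> S \<Longrightarrow> lvars_in n (F i)) \<Longrightarrow> lvars_in n (\<Prod>i\<in>S. F i)"
  by (induction S rule: infinite_finite_induct) (auto simp: lvars_in_one lvars_in_mult)

lemma lvars_in_sum: "(\<And>i. i \<in> S \<Longrightarrow> lvars_in n (F i)) \<Longrightarrow> lvars_in n (\<Sum>i\<in>S. F i)"
proof (induction S rule: infinite_finite_induct)
  case (insert x F)
  then show ?case by (simp add: lvars_in_add)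
qed (auto simp: lvars_in_def)

lemma lvars_in_pstar: "lvars_in n p \<Longrightarrow> lvars_in n (pstar p)"
  unfolding pstar_def
  by (rule lvars_in_sum) (auto simp: lvars_in_def)

definition Dz :: "nat \<Rightarrow> nat \<Rightarrow> lpoly" where
  "Dz b n = (\<Prod>i<n. \<Prod>j\<in>{0..<n} - {i}. (1 - xpow i 1 * xpow j (- 1)) ^ b)"

lemma lvars_in_Dz: "lvars_in n (Dz b n)"
  unfolding Dz_def
  by (intro lvars_in_prod lvars_in_power lvars_in_diff lvars_in_mult lvars_in_one lvars_in_xpow) auto

lemma peval_Dz:
  assumes "\<forall>j. w j \<noteq> 0"
  shows "peval (Dz b n) w = (\<Prod>i<n. \<Prod>j\<in>{0..<n} - {i}. (1 - w i / w j) ^ b)"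
  unfolding Dz_def using assms
  by (simp add: peval_prod peval_power peval_diff peval_mult power_int_minus divide_inverse)

lemma ip'_alg:
  assumes "tens_space N n f" "tens_space N n g"
  shows "ip' N b n f g = (1 / fact n) * (\<Sum>a\<in>idx_tuples N n. Poly_Mapping.lookup (Dz b n * pstar (f a) * g a) 0)"
  unfolding ip'_def
proof (intro arg_cong[where f="\<lambda>x. (1 / fact n) * x"] sum.cong refl)
  fix a
  have "torus_int n (\<lambda>w. (\<Prod>i<n. \<Prod>j\<in>{0..<n} - {i}. (1 - w i / w j) ^ b)
        * peval (conjc (f a)) (\<lambda>j. inverse (w j)) * peval (g a) w) = torus_int n (peval (Dz b n * pstar (f a) * g a))"
    by (rule torus_cong) (simp add: peval_mult peval_Dz peval_conjc_inv)
  also have "\<dots> = Poly_Mapping.lookup (Dz b n * pstar (f a) * g a) 0"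
    by (rule torus_peval) (use assms in \<open>auto simp: tens_space_def intro!: lvars_in_mult lvars_in_Dz lvars_in_pstar\<close>)
  finally show "torus_int n (\<lambda>w. (\<Prod>i<n. \<Prod>j\<in>{0..<n} - {i}. (1 - w i / w j) ^ b)
        * peval (conjc (f a)) (\<lambda>j. inverse (w j)) * peval (g a) w) = Poly_Mapping.lookup (Dz b n * pstar (f a) * g a) 0" .
qed

definition sc :: "nat \<Rightarrow> (nat \<Rightarrow>\<^sub>0 int) \<Rightarrow> (nat \<Rightarrow>\<^sub>0 int)" where
  "sc N m = (\<Sum>j\<in>Poly_Mapping.keys m. Poly_Mapping.single j (- int N * Poly_Mapping.lookup m j))"

lemma lookup_sc: "Poly_Mapping.lookup (sc N m) k = - int N * Poly_Mapping.lookup m k"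
  by (cases "k \<in> Poly_Mapping.keys m") (auto simp: sc_def lookup_sum lookup_single when_def in_keys_iff)

lemma sc_add: "sc N (m + m') = sc N m + sc N m'"
  by (rule poly_mapping_eqI) (simp add: lookup_sc lookup_add algebra_simps)

lemma sc_uminus: "sc N (- m) = - sc N m"
  by (rule poly_mapping_eqI) (simp add: lookup_sc)

lemma sc_zero[simp]: "sc N 0 = 0"
  by (simp add: sc_def)

lemma sc_single: "sc N (Poly_Mapping.single j e) = Poly_Mapping.single j (- int N * e)"
  by (rule poly_mapping_eqI) (simp add: lookup_sc lookup_single when_def)

lemma sc_eq_0: "N \<ge> 1 \<Longrightarrow> sc N m = 0 \<longleftrightarrow> m = 0"
  by (auto simp: poly_mapping_eq_iff fun_eq_iff lookup_sc)

definition sig :: "nat \<Rightarrow> lpoly \<Rightarrow> lpoly" where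
  "sig N = push (sc N) (\<lambda>x. x)"

lemma sig_add: "sig N (p + q) = sig N p + sig N q"
  unfolding sig_def by (rule push_add) simp

lemma sig_mult: "sig N (p * q) = sig N p * sig N q"
  unfolding sig_def by (rule push_mult) (simp_all add: sc_add)

lemma sig_single: "sig N (Poly_Mapping.single m c) = Poly_Mapping.single (sc N m) c"
  unfolding sig_def by (simp add: push_single)

lemma sig_zero[simp]: "sig N 0 = 0"
  using add_ext_zero[of "sig N"] sig_add by blast

lemma sig_uminus: "sig N (- p) = - sig N p"
proof -
  have "sig N p + sig N (-p) = 0" using sig_add[of N p "-p"] by simp
  then have "- sig N p = sig N (-p)" by (simp add: neg_eq_iff_add_eq_0)
  then show ?thesis by simp
qed

lemma sig_diff: "sig N (p - q) = sig N p - sig N q"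
  using sig_add[of N p "-q"] sig_uminus[of N q] by simp

lemma sig_one[simp]: "sig N 1 = 1"
proof -
  have "(1::lpoly) = Poly_Mapping.single 0 1" by simp
  then show ?thesis by (metis sig_single sc_zero)
qed

lemma sig_lconst[simp]: "sig N (lconst c) = lconst c"
  by (simp add: lconst_def sig_single)

lemma sig_xpow: "sig N (xpow j e) = xpow j (- int N * e)"
  by (simp add: xpow_def lmono_def sig_single sc_single)

lemma sig_prod: "sig N (\<Prod>i\<in>S. F i) = (\<Prod>i\<in>S. sig N (F i))"
  by (induction S rule: infinite_finite_induct) (auto simp: sig_mult)

lemma sig_power: "sig N (p ^ k) = sig N p ^ k"
  by (induction k) (auto simp: sig_mult)

lemma sig_sum: "sig N (\<Sum>i\<in>S. F i) = (\<Sum>i\<in>S. sig N (F i))"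
  by (rule add_ext_sum) (simp add: sig_add)

lemma lookup_sig: "Poly_Mapping.lookup (sig N p) x = (\<Sum>m\<in>Poly_Mapping.keys p. Poly_Mapping.lookup p m when x = sc N m)"
  by (simp add: sig_def push_def lookup_sum lookup_single) (intro sum.cong refl, auto simp: when_def)

lemma lookup_sig_0:
  assumes "N \<ge> 1"
  shows "Poly_Mapping.lookup (sig N p) 0 = Poly_Mapping.lookup p 0"
proof -
  have "Poly_Mapping.lookup (sig N p) 0 = (\<Sum>m\<in>Poly_Mapping.keys p. Poly_Mapping.lookup p m when m = 0)"
    unfolding lookup_sig using sc_eq_0[OF assms] by (intro sum.cong refl) (auto simp: when_def)
  also have "\<dots> = Poly_Mapping.lookup p 0"
    by (cases "0 \<in> Poly_Mapping.keys p") (auto simp: when_def in_keys_iff)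
  finally show ?thesis .
qed

lemma lookup_sig_nondiv:
  assumes "\<not> int N dvd Poly_Mapping.lookup x i"
  shows "Poly_Mapping.lookup (sig N p) x = 0"
  unfolding lookup_sig
proof (rule sum.neutral, rule ballI)
  fix m
  have "x \<noteq> sc N m"
  proof
    assume "x = sc N m"
    then have "Poly_Mapping.lookup x i = int N * (- Poly_Mapping.lookup m i)" by (simp add: lookup_sc)
    then show False using assms by simp
  qed
  then show "(Poly_Mapping.lookup p m when x = sc N m) = 0" by simp
qed

lemma pstar_add: "pstar (p + q) = pstar p + pstar q"
  unfolding pstar_push by (rule push_add) simp

lemma pstar_mult: "pstar (p * q) = pstar p * pstar q"
  unfolding pstar_push by (rule push_mult) simp_all

lemma pstar_single: "pstar (Poly_Mapping.single m c) = Poly_Mapping.single (- m) (cnj c)"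
  unfolding pstar_push by (simp add: push_single)

lemma pstar_sum: "pstar (\<Sum>i\<in>S. F i) = (\<Sum>i\<in>S. pstar (F i))"
  by (rule add_ext_sum) (simp add: pstar_add)

lemma pstar_sig: "pstar (sig N p) = sig N (pstar p)"
  by (rule add_ext_eq[where \<Phi>="\<lambda>p. pstar (sig N p)" and \<Psi>="\<lambda>p. sig N (pstar p)"])
     (simp_all add: pstar_add sig_add pstar_single sig_single sc_uminus)

lemma lmono_mult: "lmono d * lmono e = lmono (d + e)"
  by (simp add: lmono_def mult_single)

lemma pstar_lmono: "pstar (lmono d) = lmono (- d)"
  by (simp add: lmono_def pstar_single)

lemma lookup_lmono_mult: "Poly_Mapping.lookup (lmono d * q) k = Poly_Mapping.lookup q (k - d)"
proof -
  have "lmono d * q = (\<Sum>m\<in>Poly_Mapping.keys q. Poly_Mapping.single (d + m) (Poly_Mapping.lookup q m))"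
    by (subst pm_decomp[of q]) (simp add: sum_distrib_left lmono_def mult_single)
  then have "Poly_Mapping.lookup (lmono d * q) k = (\<Sum>m\<in>Poly_Mapping.keys q. Poly_Mapping.lookup q m when m = k - d)"
    by (simp add: lookup_sum lookup_single when_def eq_diff_eq add.commute)
  also have "\<dots> = Poly_Mapping.lookup q (k - d)"
    by (cases "k - d \<in> Poly_Mapping.keys q") (auto simp: when_def in_keys_iff)
  finally show ?thesis .
qed

definition ea :: "nat \<Rightarrow> nat list \<Rightarrow> (nat \<Rightarrow>\<^sub>0 int)" where
  "ea n a = (\<Sum>i<n. Poly_Mapping.single i (int (a ! i)))"

lemma lookup_ea: "Poly_Mapping.lookup (ea n a) k = (if k < n then int (a ! k) else 0)"
  by (simp add: ea_def lookup_sum lookup_single when_def)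

definition om0 :: "nat \<Rightarrow> nat \<Rightarrow> tens \<Rightarrow> lpoly" where
  "om0 N n f = (\<Sum>a\<in>idx_tuples N n. lmono (ea n a) * sig N (f a))"

lemma finite_idx: "finite (idx_tuples N n)"
proof -
  have "idx_tuples N n = {a. set a \<subseteq> {1..N} \<and> length a = n}"
    by (auto simp: idx_tuples_def)
  then show ?thesis using finite_lists_length_eq[of "{1..N}" n] by simp
qed

lemma Nabla_sig: "Nabla N b n = sig N (Dz b n)"
proof -
  have "sig N (Dz b n) = (\<Prod>i<n. \<Prod>j\<in>{0..<n} - {i}. (1 - xpow i (- int N) * xpow j (int N)) ^ b)"
    by (simp add: Dz_def sig_prod sig_power sig_diff sig_mult sig_xpow)
  also have "\<dots> = (\<Prod>i<n. \<Prod>j\<in>{j. j \<in> {..<n} \<and> i \<noteq> j}. (1 - xpow j (int N) * xpow i (- int N)) ^ b)"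
    by (intro prod.cong refl) (auto simp: mult.commute)
  also have "\<dots> = (\<Prod>j<n. \<Prod>i\<in>{i. i \<in> {..<n} \<and> i \<noteq> j}. (1 - xpow j (int N) * xpow i (- int N)) ^ b)"
    by (rule prod.swap_restrict) auto
  also have "\<dots> = Nabla N b n"
    unfolding Nabla_def by (intro prod.cong refl) auto
  finally show ?thesis by simp
qed

lemma alg_main:
  assumes N: "N \<ge> 1"
  shows "Poly_Mapping.lookup (Nabla N b n * pstar (om0 N n f) * om0 N n g) 0
       = (\<Sum>a\<in>idx_tuples N n. Poly_Mapping.lookup (Dz b n * pstar (f a) * g a) 0)"
proof -
  let ?I = "idx_tuples N n"
  let ?R = "\<lambda>a a'. Dz b n * pstar (f a) * g a'"
  have "Nabla N b n * pstar (om0 N n f) * om0 N n g =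
     (\<Sum>a\<in>?I. \<Sum>a'\<in>?I. lmono (ea n a' - ea n a) * sig N (?R a a'))"
  proof -
    have "Nabla N b n * pstar (om0 N n f) * om0 N n g =
      (\<Sum>a\<in>?I. \<Sum>a'\<in>?I. sig N (Dz b n) * (lmono (- ea n a) * sig N (pstar (f a))) * (lmono (ea n a') * sig N (g a')))"
      by (simp add: Nabla_sig om0_def pstar_sum pstar_mult pstar_lmono pstar_sig sum_distrib_left sum_distrib_right) (rule sum.swap)
    also have "\<dots> = (\<Sum>a\<in>?I. \<Sum>a'\<in>?I. lmono (ea n a' - ea n a) * sig N (?R a a'))"
    proof (intro sum.cong refl)
      fix a a'
      have "lmono (ea n a' - ea n a) = lmono (- ea n a) * lmono (ea n a')"
        by (simp add: lmono_mult)
      then show "sig N (Dz b n) * (lmono (- ea n a) * sig N (pstar (f a))) * (lmono (ea n a') * sig N (g a'))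
          = lmono (ea n a' - ea n a) * sig N (?R a a')"
        by (simp add: sig_mult mult_ac)
    qed
    finally show ?thesis .
  qed
  then have "Poly_Mapping.lookup (Nabla N b n * pstar (om0 N n f) * om0 N n g) 0 =
      (\<Sum>a\<in>?I. \<Sum>a'\<in>?I. Poly_Mapping.lookup (sig N (?R a a')) (ea n a - ea n a'))"
    by (simp add: lookup_sum lookup_lmono_mult)
  also have "\<dots> = (\<Sum>a\<in>?I. \<Sum>a'\<in>?I. if a' = a then Poly_Mapping.lookup (?R a a) 0 else 0)"
  proof (intro sum.cong refl)
    fix a a' assume a: "a \<in> ?I" and a': "a' \<in> ?I"
    show "Poly_Mapping.lookup (sig N (?R a a')) (ea n a - ea n a') = (if a' = a then Poly_Mapping.lookup (?R a a) 0 else 0)"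
    proof (cases "a' = a")
      case True
      then show ?thesis using lookup_sig_0[OF N] by simp
    next
      case False
      have la: "length a = n" "length a' = n" using a a' by (auto simp: idx_tuples_def)
      then obtain i where i: "i < n" "a ! i \<noteq> a' ! i"
        using False nth_equalityI by metis
      have m: "a ! i \<in> set a" "a' ! i \<in> set a'" using la i by auto
      have sa: "set a \<subseteq> {1..N}" "set a' \<subseteq> {1..N}" using a a' by (auto simp: idx_tuples_def)
      have r: "a ! i \<in> {1..N}" "a' ! i \<in> {1..N}" using m sa by blast+
      have "\<not> int N dvd (int (a ! i) - int (a' ! i))"
      proof
        assume d: "int N dvd (int (a ! i) - int (a' ! i))"
        have "int (a ! i) - int (a' ! i) \<noteq> 0" using i by simp
        moreover have "\<bar>int (a ! i) - int (a' ! i)\<bar> < int N" using r by auto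
        ultimately show False using d dvd_imp_le_int[of "int (a ! i) - int (a' ! i)" "int N"] by simp
      qed
      then have "Poly_Mapping.lookup (sig N (?R a a')) (ea n a - ea n a') = 0"
        by (intro lookup_sig_nondiv[where i=i]) (simp add: lookup_minus lookup_ea i)
      then show ?thesis using False by simp
    qed
  qed
  also have "\<dots> = (\<Sum>a\<in>?I. Poly_Mapping.lookup (?R a a) 0)"
    by (simp add: finite_idx)
  finally show ?thesis .
qed

lemma lookup_map_key:
  assumes "inj f"
  shows "Poly_Mapping.lookup (Poly_Mapping.map_key f p) k = Poly_Mapping.lookup p (f k)"
proof -
  have [transfer_rule]: "inj f" by fact
  show ?thesis by transfer simp
qed

lemma map_key_transpose_twice:
  "Poly_Mapping.map_key (Transposition.transpose i j) (Poly_Mapping.map_key (Transposition.transpose i j) m) = m"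
  by (rule poly_mapping_eqI) (simp add: lookup_map_key inj_transpose)

lemma inj_map_key_transpose: "inj (Poly_Mapping.map_key (Transposition.transpose i j))"
  by (metis map_key_transpose_twice injI)

definition swp :: "nat \<Rightarrow> nat \<Rightarrow> nat list \<Rightarrow> nat list" where
  "swp i j a = a[i := a ! j, j := a ! i]"

lemma Kop_iff:
  "Kop i j f = - Pop i j f \<longleftrightarrow>
   (\<forall>a m. Poly_Mapping.lookup (f a) (Poly_Mapping.map_key (Transposition.transpose i j) m) = - Poly_Mapping.lookup (f (swp i j a)) m)"
  by (simp add: Kop_def Pop_def swp_def fun_eq_iff poly_mapping_eq_iff lookup_map_key inj_map_key_transpose)

definition antis :: "nat \<Rightarrow> tens \<Rightarrow> bool" where
  "antis n f \<longleftrightarrow> (\<forall>i<n. \<forall>j<n. i \<noteq> j \<longrightarrow> (\<forall>a m. Poly_Mapping.lookup (f a) (Poly_Mapping.map_key (Transposition.transpose i j) m) = - Poly_Mapping.lookup (f (swp i j a)) m))"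

lemma F_space_iff: "F_space N n f \<longleftrightarrow> tens_space N n f \<and> antis n f"
  by (simp add: F_space_def antis_def Kop_iff)

lemma lookup_lconst_mult: "Poly_Mapping.lookup (lconst c * q) k = c * Poly_Mapping.lookup q k"
proof -
  have "lconst c * q = (\<Sum>m\<in>Poly_Mapping.keys q. Poly_Mapping.single m (c * Poly_Mapping.lookup q m))"
    by (subst pm_decomp[of q]) (simp add: sum_distrib_left lconst_def mult_single)
  then have "Poly_Mapping.lookup (lconst c * q) k = (\<Sum>m\<in>Poly_Mapping.keys q. c * Poly_Mapping.lookup q m when m = k)"
    by (simp add: lookup_sum lookup_single when_def eq_commute)
  also have "\<dots> = c * Poly_Mapping.lookup q k"
    by (cases "k \<in> Poly_Mapping.keys q") (auto simp: when_def in_keys_iff)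
  finally show ?thesis .
qed

lemma lvars_in_lconst: "lvars_in n (lconst c)"
  by (simp add: lvars_in_def lconst_def)

lemma F_space_add: "F_space N n f \<Longrightarrow> F_space N n g \<Longrightarrow> F_space N n (\<lambda>a. f a + g a)"
  by (auto simp: F_space_iff tens_space_def antis_def lookup_add lvars_in_add)

lemma F_space_smult: "F_space N n f \<Longrightarrow> F_space N n (\<lambda>a. lconst c * f a)"
  by (auto simp: F_space_iff tens_space_def antis_def lookup_lconst_mult lvars_in_mult lvars_in_lconst)

lemma F_space_zero: "F_space N n (\<lambda>a. 0)"
  by (auto simp: F_space_iff tens_space_def antis_def lvars_in_def)

lemma om0_add: "om0 N n (\<lambda>a. f a + g a) = om0 N n f + om0 N n g"
  by (simp add: om0_def sig_add distrib_left sum.distrib)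

lemma om0_smult: "om0 N n (\<lambda>a. lconst c * f a) = lconst c * om0 N n f"
  by (simp add: om0_def sig_mult sum_distrib_left mult_ac)

lemma om0_zero: "om0 N n (\<lambda>a. 0) = 0"
  by (simp add: om0_def)

lemma ul_range: "N \<ge> 1 \<Longrightarrow> 1 \<le> ul N x \<and> ul N x \<le> int N"
  by (simp add: ul_def pos_mod_bound add1_zle_eq)

lemma ul_ol: assumes "N \<ge> 1" shows "ul N x - int N * ol N x = x"
proof -
  have e: "ul N x - x = int N * (- ((x - 1) div int N))"
    unfolding ul_def using div_mult_mod_eq[of "x - 1" "int N"] by (simp add: algebra_simps)
  have "ol N x = - ((x - 1) div int N)"
    unfolding ol_def e using assms by (subst nonzero_mult_div_cancel_left) auto
  then show ?thesis using e by simp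
qed

lemma ul_inv: assumes "N \<ge> 1" "1 \<le> u" "u \<le> int N"
  shows "ul N (u - int N * v) = u" "ol N (u - int N * v) = v"
proof -
  have "(u - int N * v - 1) mod int N = (u - 1) mod int N"
  proof -
    have "u - int N * v - 1 = (u - 1) + (- v) * int N" by (simp add: algebra_simps)
    then show ?thesis by (simp only: mod_mult_self1)
  qed
  also have "\<dots> = u - 1" using assms by (intro mod_pos_pos_trivial) auto
  finally show u: "ul N (u - int N * v) = u" by (simp add: ul_def)
  show "ol N (u - int N * v) = v" unfolding ol_def u using assms by simp
qed

definition Ak :: "nat \<Rightarrow> nat \<Rightarrow> (nat \<Rightarrow> int) \<Rightarrow> nat list" where
  "Ak N n g = map (\<lambda>i. nat (ul N (g i))) [0..<n]"

definition Mk :: "nat \<Rightarrow> nat \<Rightarrow> (nat \<Rightarrow> int) \<Rightarrow> (nat \<Rightarrow>\<^sub>0 int)" where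
  "Mk N n g = (\<Sum>i<n. Poly_Mapping.single i (ol N (g i)))"

lemma lookup_Mk: "Poly_Mapping.lookup (Mk N n g) l = (if l < n then ol N (g l) else 0)"
  by (simp add: Mk_def lookup_sum lookup_single when_def)

lemma keys_Mk: "Poly_Mapping.keys (Mk N n g) \<subseteq> {0..<n}"
  by (auto simp: in_keys_iff lookup_Mk split: if_splits)

lemma Ak_idx: assumes "N \<ge> 1" shows "Ak N n g \<in> idx_tuples N n"
proof -
  have r: "1 \<le> ul N x" "ul N x \<le> int N" for x using ul_range[OF assms] by auto
  have "Suc 0 \<le> nat (ul N x)" "nat (ul N x) \<le> N" for x using r[of x] by linarith+
  then show ?thesis by (auto simp: Ak_def idx_tuples_def)
qed

definition Ee :: "nat \<Rightarrow> nat list \<Rightarrow> (nat \<Rightarrow>\<^sub>0 int) \<Rightarrow> nat \<Rightarrow> int" where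
  "Ee N a m i = int (a ! i) - int N * Poly_Mapping.lookup m i"

lemma key_equiv:
  assumes N: "N \<ge> 1" and a: "a \<in> idx_tuples N n" and m: "Poly_Mapping.keys m \<subseteq> {0..<n}"
  shows "(a = Ak N n g \<and> m = Mk N n g) \<longleftrightarrow> (\<forall>i<n. g i = Ee N a m i)"
proof
  assume h: "a = Ak N n g \<and> m = Mk N n g"
  show "\<forall>i<n. g i = Ee N a m i"
  proof (intro allI impI)
    fix i assume i: "i < n"
    have "int (a ! i) = ul N (g i)" using h i ul_range[OF N, of "g i"] by (simp add: Ak_def)
    moreover have "Poly_Mapping.lookup m i = ol N (g i)" using h i by (simp add: lookup_Mk)
    ultimately show "g i = Ee N a m i" using ul_ol[OF N, of "g i"] by (simp add: Ee_def)
  qed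
next
  assume h: "\<forall>i<n. g i = Ee N a m i"
  have la: "length a = n" and sa: "set a \<subseteq> {1..N}" using a by (auto simp: idx_tuples_def)
  have r: "1 \<le> int (a ! i) \<and> int (a ! i) \<le> int N" if "i < n" for i
  proof -
    have "a ! i \<in> set a" using that la by simp
    then have "a ! i \<in> {1..N}" using sa by blast
    then show ?thesis by simp
  qed
  have "a = Ak N n g"
  proof (rule nth_equalityI)
    show "length a = length (Ak N n g)" using la by (simp add: Ak_def)
    fix i assume "i < length a"
    then have i: "i < n" using la by simp
    then show "a ! i = Ak N n g ! i"
      using h r[OF i] ul_inv(1)[OF N, of "int (a ! i)" "Poly_Mapping.lookup m i"] by (simp add: Ak_def Ee_def)
  qed
  moreover have "m = Mk N n g"
  proof (rule poly_mapping_eqI)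
    fix l
    show "Poly_Mapping.lookup m l = Poly_Mapping.lookup (Mk N n g) l"
    proof (cases "l < n")
      case True
      then show ?thesis using h r[OF True] ul_inv(2)[OF N, of "int (a ! l)" "Poly_Mapping.lookup m l"]
        by (simp add: lookup_Mk Ee_def)
    next
      case False
      then have "l \<notin> Poly_Mapping.keys m" using m by auto
      then show ?thesis using False by (simp add: lookup_Mk in_keys_iff)
    qed
  qed
  ultimately show "a = Ak N n g \<and> m = Mk N n g" by simp
qed

lemma of_int_lconst: "(of_int z :: lpoly) = lconst (of_int z)"
  by (simp add: lconst_def)

lemma uhat_alt: "uhat N n k a = (\<Sum>w | w permutes {0..<n}. of_int (sign w) *
      (if a = Ak N n (\<lambda>i. k ! w i) then lmono (Mk N n (\<lambda>i. k ! w i)) else 0))"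
  unfolding uhat_def Ak_def Mk_def by simp

lemma lookup_uhat: "Poly_Mapping.lookup (uhat N n k a) m = (\<Sum>w | w permutes {0..<n}. of_int (sign w) *
      (if a = Ak N n (\<lambda>i. k ! w i) \<and> m = Mk N n (\<lambda>i. k ! w i) then 1 else 0))"
proof -
  have h: "Poly_Mapping.lookup (if c then lmono M else 0) m = (if c \<and> m = M then 1 else 0)" for c M
    by (cases c) (auto simp: lmono_def lookup_single when_def)
  show ?thesis
    unfolding uhat_alt lookup_sum
    by (intro sum.cong refl) (simp only: of_int_lconst lookup_lconst_mult h)
qed

lemma finite_perms: "finite {w. w permutes {0..<(n::nat)}}"
  by (rule finite_permutations) simp

definition swpf :: "nat \<Rightarrow> nat \<Rightarrow> nat \<Rightarrow> nat" where "swpf i j = Transposition.transpose i j"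

lemma Ak_transpose:
  assumes "i < n" "j < n"
  shows "Ak N n (\<lambda>l. g (Transposition.transpose i j l)) = swp i j (Ak N n g)"
proof (rule nth_equalityI)
  show "length (Ak N n (\<lambda>l. g (Transposition.transpose i j l))) = length (swp i j (Ak N n g))"
    by (simp add: Ak_def swp_def)
  fix l assume "l < length (Ak N n (\<lambda>l. g (Transposition.transpose i j l)))"
  then have l: "l < n" by (simp add: Ak_def)
  show "Ak N n (\<lambda>l. g (Transposition.transpose i j l)) ! l = swp i j (Ak N n g) ! l"
    by (cases "l = i"; cases "l = j") (simp_all add: Ak_def swp_def nth_list_update assms l)
qed

lemma swp_swp: assumes "length a = n" "i < n" "j < n" shows "swp i j (swp i j a) = a"
proof (rule nth_equalityI)
  show "length (swp i j (swp i j a)) = length a" by (simp add: swp_def)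
  fix l assume "l < length (swp i j (swp i j a))"
  then show "swp i j (swp i j a) ! l = a ! l"
    using \<open>length a = n\<close> \<open>i < n\<close> \<open>j < n\<close>
    by (cases "l = i"; cases "l = j") (simp_all add: swp_def nth_list_update)
qed

lemma length_swp[simp]: "length (swp i j a) = length a"
  by (simp add: swp_def)

lemma swp_eq_Ak:
  assumes "i < n" "j < n"
  shows "swp i j a = Ak N n (\<lambda>l. g (Transposition.transpose i j l)) \<longleftrightarrow> a = Ak N n g"
proof -
  have lA: "length (Ak N n g') = n" for g' by (simp add: Ak_def)
  show ?thesis
  proof
    assume sw: "swp i j a = Ak N n (\<lambda>l. g (Transposition.transpose i j l))"
    then have "swp i j a = swp i j (Ak N n g)" using Ak_transpose[OF assms] by simp
    moreover have "length a = n" using sw lA[of "\<lambda>l. g (Transposition.transpose i j l)"]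
      length_swp[of i j a] by simp
    ultimately have "swp i j (swp i j a) = swp i j (swp i j (Ak N n g))" by simp
    then show "a = Ak N n g"
      using swp_swp[OF \<open>length a = n\<close> assms] swp_swp[OF lA[of g] assms] by simp
  next
    assume "a = Ak N n g"
    then show "swp i j a = Ak N n (\<lambda>l. g (Transposition.transpose i j l))"
      using Ak_transpose[OF assms] by simp
  qed
qed

lemma Mk_transpose:
  assumes "i < n" "j < n"
  shows "Mk N n (\<lambda>l. g (Transposition.transpose i j l)) = Poly_Mapping.map_key (Transposition.transpose i j) (Mk N n g)"
proof (rule poly_mapping_eqI)
  fix l
  have "Transposition.transpose i j l < n \<longleftrightarrow> l < n"
    using assms by (cases "l = i"; cases "l = j") auto
  then show "Poly_Mapping.lookup (Mk N n (\<lambda>l. g (Transposition.transpose i j l))) l =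
        Poly_Mapping.lookup (Poly_Mapping.map_key (Transposition.transpose i j) (Mk N n g)) l"
    by (simp add: lookup_Mk lookup_map_key inj_transpose)
qed

lemma uhat_antis:
  assumes "N \<ge> 1"
  shows "antis n (uhat N n k)"
  unfolding antis_def
proof (intro allI impI)
  fix i j a m assume i: "i < n" and j: "j < n" and ij: "i \<noteq> j"
  let ?t = "Transposition.transpose i j"
  let ?P = "{w. w permutes {0..<n}}"
  have tp: "?t permutes {0..<n}" using i j by (intro permutes_swap_id) auto
  have "Poly_Mapping.lookup (uhat N n k (swp i j a)) m =
     (\<Sum>w\<in>?P. of_int (sign (w \<circ> ?t)) *
      (if swp i j a = Ak N n (\<lambda>l. k ! (w \<circ> ?t) l) \<and> m = Mk N n (\<lambda>l. k ! (w \<circ> ?t) l) then 1 else 0))"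
    unfolding lookup_uhat by (rule sum_permutations_compose_right[OF tp])
  also have "\<dots> = (\<Sum>w\<in>?P. - (of_int (sign w) *
      (if a = Ak N n (\<lambda>l. k ! w l) \<and> Poly_Mapping.map_key ?t m = Mk N n (\<lambda>l. k ! w l) then 1 else 0)))"
  proof (intro sum.cong refl)
    fix w assume "w \<in> ?P"
    then have pw: "permutation w" using permutation_permutes by blast
    have pt: "permutation ?t" using permutation_permutes tp by blast
    have s: "sign (w \<circ> ?t) = - sign w"
      using sign_compose[OF pw pt] sign_swap_id[of i j] ij by simp
    have e1: "swp i j a = Ak N n (\<lambda>l. k ! (w \<circ> ?t) l) \<longleftrightarrow> a = Ak N n (\<lambda>l. k ! w l)"
      using swp_eq_Ak[OF i j, of a N "\<lambda>l. k ! w l"] by (simp add: comp_def)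
    have mk: "Mk N n (\<lambda>l. k ! (w \<circ> ?t) l) = Poly_Mapping.map_key ?t (Mk N n (\<lambda>l. k ! w l))"
      using Mk_transpose[OF i j, of N "\<lambda>l. k ! w l"] by (simp add: comp_def)
    have e2: "m = Mk N n (\<lambda>l. k ! (w \<circ> ?t) l) \<longleftrightarrow> Poly_Mapping.map_key ?t m = Mk N n (\<lambda>l. k ! w l)"
      unfolding mk
    proof
      assume "m = Poly_Mapping.map_key ?t (Mk N n (\<lambda>l. k ! w l))"
      then have "Poly_Mapping.map_key ?t m = Poly_Mapping.map_key ?t (Poly_Mapping.map_key ?t (Mk N n (\<lambda>l. k ! w l)))" by simp
      then show "Poly_Mapping.map_key ?t m = Mk N n (\<lambda>l. k ! w l)" by (simp only: map_key_transpose_twice)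
    next
      assume "Poly_Mapping.map_key ?t m = Mk N n (\<lambda>l. k ! w l)"
      then have "Poly_Mapping.map_key ?t (Poly_Mapping.map_key ?t m) = Poly_Mapping.map_key ?t (Mk N n (\<lambda>l. k ! w l))" by simp
      then show "m = Poly_Mapping.map_key ?t (Mk N n (\<lambda>l. k ! w l))" by (simp only: map_key_transpose_twice)
    qed
    show "of_int (sign (w \<circ> ?t)) *
      (if swp i j a = Ak N n (\<lambda>l. k ! (w \<circ> ?t) l) \<and> m = Mk N n (\<lambda>l. k ! (w \<circ> ?t) l) then 1 else 0) =
      - (of_int (sign w) * (if a = Ak N n (\<lambda>l. k ! w l) \<and> Poly_Mapping.map_key ?t m = Mk N n (\<lambda>l. k ! w l) then 1 else (0::complex)))"
      by (simp only: s e1 e2) simp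
  qed
  also have "\<dots> = - Poly_Mapping.lookup (uhat N n k a) (Poly_Mapping.map_key ?t m)"
    unfolding lookup_uhat by (simp add: sum_negf)
  finally show "Poly_Mapping.lookup (uhat N n k a) (Poly_Mapping.map_key ?t m) = - Poly_Mapping.lookup (uhat N n k (swp i j a)) m"
    by simp
qed

lemma uhat_tens:
  assumes "N \<ge> 1"
  shows "tens_space N n (uhat N n k)"
  unfolding tens_space_def
proof (intro conjI allI impI)
  fix a assume "a \<notin> idx_tuples N n"
  then show "uhat N n k a = 0"
    unfolding uhat_alt using Ak_idx[OF assms] by (intro sum.neutral) auto
next
  fix a
  show "lvars_in n (uhat N n k a)"
    unfolding uhat_alt
  proof (intro lvars_in_sum lvars_in_mult)
    fix w :: "nat \<Rightarrow> nat"
    show "lvars_in n (of_int (sign w))" by (simp add: of_int_lconst lvars_in_lconst)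
    show "lvars_in n (if a = Ak N n (\<lambda>i. k ! w i) then lmono (Mk N n (\<lambda>i. k ! w i)) else 0)"
      using keys_Mk by (auto simp: lvars_in_def lmono_def)
  qed
qed

lemma uhat_F: "N \<ge> 1 \<Longrightarrow> F_space N n (uhat N n k)"
  by (simp add: F_space_iff uhat_tens uhat_antis)

definition Gk :: "nat \<Rightarrow> (nat \<Rightarrow> int) \<Rightarrow> (nat \<Rightarrow>\<^sub>0 int)" where
  "Gk n g = (\<Sum>i<n. Poly_Mapping.single i (g i))"

lemma ea_sc_Ak_Mk:
  assumes N: "N \<ge> 1"
  shows "ea n (Ak N n g) + sc N (Mk N n g) = Gk n g"
proof (rule poly_mapping_eqI)
  fix l
  show "Poly_Mapping.lookup (ea n (Ak N n g) + sc N (Mk N n g)) l = Poly_Mapping.lookup (Gk n g) l"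
  proof (cases "l < n")
    case True
    have "int (nat (ul N (g l))) = ul N (g l)" using ul_range[OF N, of "g l"] by simp
    then show ?thesis using True ul_ol[OF N, of "g l"]
      by (simp add: lookup_add lookup_ea lookup_sc lookup_Mk Gk_def lookup_sum lookup_single when_def Ak_def)
  next
    case False
    then show ?thesis
      by (simp add: lookup_add lookup_ea lookup_sc lookup_Mk Gk_def lookup_sum lookup_single when_def)
  qed
qed

lemma sig_of_int: "sig N (of_int z) = of_int z"
  by (simp add: of_int_lconst)

lemma sig_if: "sig N (if c then lmono M else 0) = (if c then lmono (sc N M) else 0)"
  by (simp add: lmono_def sig_single)

lemma sig_lmono: "sig N (lmono M) = lmono (sc N M)"
  by (simp add: lmono_def sig_single)

lemma lmono_zero: "lmono 0 = 1"
  by (simp add: lmono_def)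

lemma prod_xpow: "(\<Prod>i\<in>S. xpow (h i) (e i)) = lmono (\<Sum>i\<in>S. Poly_Mapping.single (h i) (e i))"
  by (induction S rule: infinite_finite_induct) (auto simp: xpow_def lmono_mult lmono_zero)

lemma om0_uhat:
  assumes N: "N \<ge> 1"
  shows "om0 N n (uhat N n k) = ahat n k"
proof -
  let ?P = "{w. w permutes {0..<n}}"
  let ?I = "idx_tuples N n"
  have "om0 N n (uhat N n k) = (\<Sum>a\<in>?I. \<Sum>w\<in>?P. of_int (sign w) *
      (if a = Ak N n (\<lambda>i. k ! w i) then lmono (ea n a + sc N (Mk N n (\<lambda>i. k ! w i))) else 0))"
    unfolding om0_def uhat_alt
    by (simp add: sig_sum sig_mult sig_of_int sig_if sum_distrib_left mult_ac lmono_mult if_distrib sig_lmono cong: if_cong)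
  also have "\<dots> = (\<Sum>w\<in>?P. \<Sum>a\<in>?I. of_int (sign w) *
      (if a = Ak N n (\<lambda>i. k ! w i) then lmono (ea n a + sc N (Mk N n (\<lambda>i. k ! w i))) else 0))"
    by (rule sum.swap)
  also have "\<dots> = (\<Sum>w\<in>?P. of_int (sign w) * lmono (Gk n (\<lambda>i. k ! w i)))"
  proof (rule sum.cong[OF refl])
    fix w
    have "(\<Sum>a\<in>?I. of_int (sign w) *
      (if a = Ak N n (\<lambda>i. k ! w i) then lmono (ea n a + sc N (Mk N n (\<lambda>i. k ! w i))) else 0)) =
      (\<Sum>a\<in>?I. if a = Ak N n (\<lambda>i. k ! w i) then of_int (sign w) * lmono (ea n (Ak N n (\<lambda>i. k ! w i)) + sc N (Mk N n (\<lambda>i. k ! w i))) else 0)"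
      by (intro sum.cong refl) auto
    also have "\<dots> = of_int (sign w) * lmono (ea n (Ak N n (\<lambda>i. k ! w i)) + sc N (Mk N n (\<lambda>i. k ! w i)))"
      using Ak_idx[OF N] finite_idx by (simp add: sum.delta')
    finally show "(\<Sum>a\<in>?I. of_int (sign w) *
      (if a = Ak N n (\<lambda>i. k ! w i) then lmono (ea n a + sc N (Mk N n (\<lambda>i. k ! w i))) else 0)) =
      of_int (sign w) * lmono (Gk n (\<lambda>i. k ! w i))"
      by (simp add: ea_sc_Ak_Mk[OF N])
  qed
  also have "\<dots> = ahat n k"
  proof -
    have "ahat n k = (\<Sum>w\<in>?P. of_int (sign w) * lmono (\<Sum>i<n. Poly_Mapping.single (w i) (k ! i)))"
      unfolding ahat_def by (simp add: prod_xpow)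
    also have "\<dots> = (\<Sum>w\<in>?P. of_int (sign (inv w)) * lmono (\<Sum>i<n. Poly_Mapping.single (inv w i) (k ! i)))"
      by (rule sum_permutations_inverse)
    also have "\<dots> = (\<Sum>w\<in>?P. of_int (sign w) * lmono (Gk n (\<lambda>i. k ! w i)))"
    proof (rule sum.cong[OF refl])
      fix w assume "w \<in> ?P"
      then have wp: "w permutes {..<n}" by (simp add: atLeast0LessThan)
      then have "permutation w" using permutation_permutes by blast
      then have s: "sign (inv w) = sign w" by (rule sign_inverse)
      have "(\<Sum>i<n. Poly_Mapping.single (inv w i) (k ! i)) = (\<Sum>j<n. Poly_Mapping.single (inv w (w j)) (k ! w j))"
        using sum.reindex_bij_betw[OF permutes_imp_bij[OF wp], of "\<lambda>i. Poly_Mapping.single (inv w i) (k ! i)"]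
        by simp
      also have "\<dots> = Gk n (\<lambda>i. k ! w i)"
        by (simp add: Gk_def permutes_inverses(2)[OF wp])
      finally show "of_int (sign (inv w)) * lmono (\<Sum>i<n. Poly_Mapping.single (inv w i) (k ! i)) =
          of_int (sign w) * lmono (Gk n (\<lambda>i. k ! w i))" by (simp add: s)
    qed
    finally show ?thesis by simp
  qed
  finally show ?thesis .
qed

lemma permute_list_transpose:
  assumes "length a = n" "x < n" "y < n"
  shows "permute_list (Transposition.transpose x y) a = swp x y a"
proof (rule nth_equalityI)
  show "length (permute_list (Transposition.transpose x y) a) = length (swp x y a)" by simp
  fix l assume "l < length (permute_list (Transposition.transpose x y) a)"
  then have l: "l < n" using assms by simp
  have tp: "Transposition.transpose x y permutes {..<length a}" using assms by (intro permutes_swap_id) auto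
  show "permute_list (Transposition.transpose x y) a ! l = swp x y a ! l"
    using assms l permute_list_nth[OF tp, of l]
    by (cases "l = x"; cases "l = y") (simp_all add: swp_def nth_list_update)
qed

lemma perm_rel:
  assumes A: "antis n f" and wp: "w permutes {..<n}"
  shows "\<forall>a m. length a = n \<longrightarrow> Poly_Mapping.lookup (f (permute_list w a)) (Poly_Mapping.map_key w m) = of_int (sign w) * Poly_Mapping.lookup (f a) m"
  using wp finite_lessThan[of n]
proof (induction w rule: permutes_induct)
  case id
  show ?case
    by (simp add: id_def map_key_id)
next
  case (swap x y p)
  let ?t = "Transposition.transpose x y"
  show ?case
  proof (intro allI impI)
    fix a :: "nat list" and m :: "nat \<Rightarrow>\<^sub>0 int" assume la: "length a = n"
    have xy: "x < n" "y < n" using swap by auto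
    have pperm: "p permutes {..<n}" using swap by simp
    have xny: "x \<noteq> y" using swap by simp
    have IH: "\<forall>a m. length a = n \<longrightarrow> Poly_Mapping.lookup (f (permute_list p a)) (Poly_Mapping.map_key p m) = of_int (sign p) * Poly_Mapping.lookup (f a) m"
      using swap by simp
    have pp: "p permutes {..<length a}" using pperm la by simp
    have l1: "permute_list (?t \<circ> p) a = permute_list p (permute_list ?t a)"
      by (rule permute_list_compose[OF pp])
    have l2: "Poly_Mapping.map_key (?t \<circ> p) m = Poly_Mapping.map_key p (Poly_Mapping.map_key ?t m)"
      using map_key_compose[OF permutes_inj[OF pperm] inj_transpose, of x y m] by simp
    have ih: "Poly_Mapping.lookup (f (permute_list p (permute_list ?t a))) (Poly_Mapping.map_key p (Poly_Mapping.map_key ?t m))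
        = of_int (sign p) * Poly_Mapping.lookup (f (permute_list ?t a)) (Poly_Mapping.map_key ?t m)"
      using IH la by simp
    have an: "Poly_Mapping.lookup (f (permute_list ?t a)) (Poly_Mapping.map_key ?t m) = - Poly_Mapping.lookup (f (swp x y (permute_list ?t a))) m"
      using A xy xny unfolding antis_def by auto
    have sw: "swp x y (permute_list ?t a) = a"
      using permute_list_transpose[OF la xy] swp_swp[OF la xy] by simp
    have pw: "permutation p" using permutation_permutes pperm by blast
    have pt: "permutation ?t" using permutation_permutes permutes_swap_id[of x "{..<n}" y] xy by blast
    have s: "sign (?t \<circ> p) = - sign p"
      using sign_compose[OF pt pw] sign_swap_id[of x y] xny by simp
    show "Poly_Mapping.lookup (f (permute_list (?t \<circ> p) a)) (Poly_Mapping.map_key (?t \<circ> p) m) = of_int (sign (?t \<circ> p)) * Poly_Mapping.lookup (f a) m"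
      unfolding l1 l2 ih an sw s by simp
  qed
qed

definition cf :: "nat \<Rightarrow> nat \<Rightarrow> tens \<Rightarrow> int list \<Rightarrow> complex" where
  "cf N n f k = Poly_Mapping.lookup (f (Ak N n (\<lambda>i. k ! i))) (Mk N n (\<lambda>i. k ! i))"

definition KK :: "nat \<Rightarrow> nat \<Rightarrow> tens \<Rightarrow> int list set" where
  "KK N n f = {k. length k = n \<and> sorted_wrt (>) k \<and> cf N n f k \<noteq> 0}"

lemma Ak_cong: "(\<And>i. i < n \<Longrightarrow> g i = g' i) \<Longrightarrow> Ak N n g = Ak N n g'"
  by (simp add: Ak_def)

lemma Mk_cong: "(\<And>i. i < n \<Longrightarrow> g i = g' i) \<Longrightarrow> Mk N n g = Mk N n g'"
  by (simp add: Mk_def)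

lemma sorted_gt_distinct: "sorted_wrt (>) (xs::int list) \<Longrightarrow> distinct xs"
  by (induction xs) auto

lemma perm_unique:
  assumes "p permutes {..<n}" "q permutes {..<n}" "length xs = n" "distinct xs"
    and "permute_list p xs = permute_list q xs"
  shows "p = q"
proof
  fix l
  show "p l = q l"
  proof (cases "l < n")
    case True
    have "permute_list p xs ! l = permute_list q xs ! l" using assms(5) by simp
    then have "xs ! p l = xs ! q l"
      using permute_list_nth[of p xs l] permute_list_nth[of q xs l] assms True by simp
    moreover have "p l < n" "q l < n"
      using permutes_in_image[OF assms(1)] permutes_in_image[OF assms(2)] True by auto
    ultimately show ?thesis using assms(3,4) nth_eq_iff_index_eq by metis
  next
    case False
    then show ?thesis using permutes_not_in[OF assms(1)] permutes_not_in[OF assms(2)] by simp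
  qed
qed

lemma sorted_gt_unique:
  assumes "sorted_wrt (>) (xs::int list)" "sorted_wrt (>) ys" "mset xs = mset ys"
  shows "xs = ys"
proof -
  have "sorted_wrt (<) (rev xs)" "sorted_wrt (<) (rev ys)"
    using assms by (simp_all add: sorted_wrt_rev)
  then have "sorted (rev xs)" "distinct (rev xs)" "sorted (rev ys)" "distinct (rev ys)"
    by (simp_all add: strict_sorted_iff)
  moreover have "set (rev xs) = set (rev ys)" using assms(3) by (metis set_mset_mset set_rev)
  ultimately have "rev xs = rev ys" by (rule sorted_distinct_set_unique)
  then show ?thesis by simp
qed

lemma Ak_perm:
  assumes "w permutes {..<n}"
  shows "Ak N n (\<lambda>i. g (w i)) = permute_list w (Ak N n g)"
proof (rule nth_equalityI)
  show "length (Ak N n (\<lambda>i. g (w i))) = length (permute_list w (Ak N n g))" by (simp add: Ak_def)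
  fix i assume "i < length (Ak N n (\<lambda>i. g (w i)))"
  then have i: "i < n" by (simp add: Ak_def)
  have wp: "w permutes {..<length (Ak N n g)}" using assms by (simp add: Ak_def)
  have "w i < n" using permutes_in_image[OF assms] i by simp
  then show "Ak N n (\<lambda>i. g (w i)) ! i = permute_list w (Ak N n g) ! i"
    using permute_list_nth[OF wp, of i] i by (simp add: Ak_def)
qed

lemma Mk_perm:
  assumes "w permutes {..<n}"
  shows "Mk N n (\<lambda>i. g (w i)) = Poly_Mapping.map_key w (Mk N n g)"
proof (rule poly_mapping_eqI)
  fix l
  have "w l < n \<longleftrightarrow> l < n" using permutes_in_image[OF assms] by simp
  then show "Poly_Mapping.lookup (Mk N n (\<lambda>i. g (w i))) l = Poly_Mapping.lookup (Poly_Mapping.map_key w (Mk N n g)) l"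
    by (simp add: lookup_Mk lookup_map_key permutes_inj[OF assms])
qed

lemma finite_KK:
  assumes N: "N \<ge> 1"
  shows "finite (KK N n f)"
proof -
  let ?S = "SIGMA a:idx_tuples N n. Poly_Mapping.keys (f a)"
  have "KK N n f \<subseteq> (\<lambda>(a, m). map (Ee N a m) [0..<n]) ` ?S"
  proof
    fix k assume k: "k \<in> KK N n f"
    let ?a = "Ak N n (\<lambda>i. k ! i)" and ?m = "Mk N n (\<lambda>i. k ! i)"
    have a: "?a \<in> idx_tuples N n" by (rule Ak_idx[OF N])
    have m: "?m \<in> Poly_Mapping.keys (f ?a)" using k by (simp add: KK_def cf_def in_keys_iff)
    have "\<forall>i<n. k ! i = Ee N ?a ?m i"
      using key_equiv[OF N a keys_Mk[of N n "\<lambda>i. k ! i"], of "\<lambda>i. k ! i"] by simp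
    then have "k = map (Ee N ?a ?m) [0..<n]"
      using k by (intro nth_equalityI) (auto simp: KK_def)
    then show "k \<in> (\<lambda>(a, m). map (Ee N a m) [0..<n]) ` ?S" using a m by force
  qed
  moreover have "finite ?S" using finite_idx by auto
  ultimately show ?thesis by (meson finite_imageI finite_subset)
qed

lemma tens_zero:
  assumes "tens_space N n h" "\<not> (a \<in> idx_tuples N n \<and> Poly_Mapping.keys m \<subseteq> {0..<n})"
  shows "Poly_Mapping.lookup (h a) m = 0"
proof (cases "a \<in> idx_tuples N n")
  case False
  then show ?thesis using assms(1) by (simp add: tens_space_def)
next
  case True
  then have "\<not> Poly_Mapping.keys m \<subseteq> {0..<n}" using assms(2) by simp
  moreover have "lvars_in n (h a)" using assms(1) by (simp add: tens_space_def)
  ultimately have "m \<notin> Poly_Mapping.keys (h a)" by (auto simp: lvars_in_def)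
  then show ?thesis by (simp add: in_keys_iff)
qed

lemma decomp:
  assumes N: "N \<ge> 1" and F: "F_space N n f"
  shows "f a = (\<Sum>k\<in>KK N n f. lconst (cf N n f k) * uhat N n k a)"
proof (rule poly_mapping_eqI)
  fix m
  let ?K = "KK N n f"
  let ?P = "{w. w permutes {0..<n}}"
  have ts: "tens_space N n f" and an: "antis n f" using F by (simp_all add: F_space_iff)
  have rhs: "Poly_Mapping.lookup (\<Sum>k\<in>?K. lconst (cf N n f k) * uhat N n k a) m
      = (\<Sum>k\<in>?K. cf N n f k * Poly_Mapping.lookup (uhat N n k a) m)"
    by (simp add: lookup_sum lookup_lconst_mult)
  show "Poly_Mapping.lookup (f a) m = Poly_Mapping.lookup (\<Sum>k\<in>?K. lconst (cf N n f k) * uhat N n k a) m"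
  proof (cases "a \<in> idx_tuples N n \<and> Poly_Mapping.keys m \<subseteq> {0..<n}")
    case False
    have "Poly_Mapping.lookup (f a) m = 0" by (rule tens_zero[OF ts False])
    moreover have "Poly_Mapping.lookup (uhat N n k a) m = 0" for k
      by (rule tens_zero[OF uhat_tens[OF N] False])
    ultimately show ?thesis unfolding rhs by simp
  next
    case True
    then have aI: "a \<in> idx_tuples N n" and mk: "Poly_Mapping.keys m \<subseteq> {0..<n}" by auto
    have la: "length a = n" using aI by (simp add: idx_tuples_def)
    define e where "e = Ee N a m"
    define el where "el = map e [0..<n]"
    have lel: "length el = n" by (simp add: el_def)
    have am: "a = Ak N n e \<and> m = Mk N n e"
      using key_equiv[OF N aI mk, of e] by (simp add: e_def)
    have uh: "Poly_Mapping.lookup (uhat N n k a) m = (\<Sum>w\<in>?P. of_int (sign w) * (if permute_list w k = el then 1 else 0))"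
      if lk: "length k = n" for k
      unfolding lookup_uhat
    proof (intro sum.cong refl)
      fix w assume "w \<in> ?P"
      then have wp: "w permutes {..<n}" by (simp add: atLeast0LessThan)
      have "(a = Ak N n (\<lambda>i. k ! w i) \<and> m = Mk N n (\<lambda>i. k ! w i)) \<longleftrightarrow> (\<forall>i<n. k ! w i = e i)"
        using key_equiv[OF N aI mk, of "\<lambda>i. k ! w i"] by (simp add: e_def)
      also have "\<dots> \<longleftrightarrow> permute_list w k = el"
      proof -
        have wk: "w permutes {..<length k}" using wp lk by simp
        have "permute_list w k = el \<longleftrightarrow> (\<forall>i<n. permute_list w k ! i = el ! i)"
          using lk lel by (simp add: list_eq_iff_nth_eq)
        also have "\<dots> \<longleftrightarrow> (\<forall>i<n. k ! w i = e i)"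
          using permute_list_nth[OF wk] lk by (simp add: el_def)
        finally show ?thesis by simp
      qed
      finally show "of_int (sign w) * (if a = Ak N n (\<lambda>i. k ! w i) \<and> m = Mk N n (\<lambda>i. k ! w i) then 1 else 0) =
          of_int (sign w) * (if permute_list w k = el then 1 else (0::complex))" by simp
    qed
    show ?thesis
    proof (cases "distinct el")
      case False
      have "Poly_Mapping.lookup (uhat N n k a) m = 0" if "k \<in> ?K" for k
      proof -
        have lk: "length k = n" and dk: "distinct k" using that sorted_gt_distinct by (auto simp: KK_def)
        have "permute_list w k \<noteq> el" if "w \<in> ?P" for w
        proof -
          have "w permutes {..<length k}" using that lk by (simp add: atLeast0LessThan)
          then have "distinct (permute_list w k)" using dk by simp
          then show ?thesis using False by auto
        qed
        then show ?thesis using uh[OF lk] by simp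
      qed
      then have r0: "Poly_Mapping.lookup (\<Sum>k\<in>?K. lconst (cf N n f k) * uhat N n k a) m = 0"
        unfolding rhs by simp
      obtain i j where ij: "i < n" "j < n" "i \<noteq> j" "el ! i = el ! j"
        using False lel by (auto simp: distinct_conv_nth)
      have eij: "e i = e j" using ij by (simp add: el_def)
      have ai: "a ! i = a ! j" using am ij eij by (simp add: Ak_def)
      have mi: "Poly_Mapping.lookup m i = Poly_Mapping.lookup m j" using am ij eij by (simp add: lookup_Mk)
      have sw: "swp i j a = a"
      proof (rule nth_equalityI)
        show "length (swp i j a) = length a" by simp
        fix l assume "l < length (swp i j a)"
        then show "swp i j a ! l = a ! l" using ai la ij
          by (cases "l = i"; cases "l = j") (simp_all add: swp_def nth_list_update)
      qed
      have mt: "Poly_Mapping.map_key (Transposition.transpose i j) m = m"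
      proof (rule poly_mapping_eqI)
        fix l show "Poly_Mapping.lookup (Poly_Mapping.map_key (Transposition.transpose i j) m) l = Poly_Mapping.lookup m l"
          using mi by (cases "l = i"; cases "l = j") (simp_all add: lookup_map_key inj_transpose)
      qed
      have "Poly_Mapping.lookup (f a) (Poly_Mapping.map_key (Transposition.transpose i j) m) = - Poly_Mapping.lookup (f (swp i j a)) m"
        using an ij unfolding antis_def by blast
      then have "Poly_Mapping.lookup (f a) m = 0" unfolding sw mt by simp
      then show ?thesis using r0 by simp
    next
      case True
      define k0 where "k0 = rev (sort el)"
      have lk0: "length k0 = n" using lel by (simp add: k0_def)
      have sk0: "sorted_wrt (>) k0"
        unfolding k0_def sorted_wrt_rev using True by (simp add: strict_sorted_iff)
      have mk0: "mset k0 = mset el" by (simp add: k0_def)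
      obtain w0 where w0: "w0 permutes {..<length k0}" "permute_list w0 k0 = el"
        using mset_eq_permutation[OF mk0[symmetric]] by blast
      have w0p: "w0 permutes {..<n}" using w0 lk0 by simp
      have w0P: "w0 \<in> ?P" using w0p by (simp add: atLeast0LessThan)
      have dk0: "distinct k0" using sk0 sorted_gt_distinct by blast
      have other: "Poly_Mapping.lookup (uhat N n k a) m = 0" if "length k = n" "sorted_wrt (>) k" "k \<noteq> k0" for k
      proof -
        have "permute_list w k \<noteq> el" if "w \<in> ?P" for w
        proof
          assume h: "permute_list w k = el"
          have "w permutes {..<length k}" using that \<open>length k = n\<close> by (simp add: atLeast0LessThan)
          then have "mset (permute_list w k) = mset k" by (rule mset_permute_list)
          then have "mset k = mset el" using h by simp
          then have "k = k0" using sorted_gt_unique[OF \<open>sorted_wrt (>) k\<close> sk0] mk0 by simp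
          then show False using \<open>k \<noteq> k0\<close> by simp
        qed
        then show ?thesis using uh[OF \<open>length k = n\<close>] by simp
      qed
      have at0: "Poly_Mapping.lookup (uhat N n k0 a) m = of_int (sign w0)"
      proof -
        have "Poly_Mapping.lookup (uhat N n k0 a) m = (\<Sum>w\<in>?P. if w = w0 then of_int (sign w0) else 0)"
          unfolding uh[OF lk0]
        proof (intro sum.cong refl)
          fix w assume "w \<in> ?P"
          then have wp: "w permutes {..<n}" by (simp add: atLeast0LessThan)
          have "permute_list w k0 = el \<longleftrightarrow> w = w0"
            using perm_unique[OF wp w0p lk0 dk0] w0(2) by auto
          then show "of_int (sign w) * (if permute_list w k0 = el then 1 else 0) = (if w = w0 then of_int (sign w0) else (0::complex))"
            by auto
        qed
        also have "\<dots> = of_int (sign w0)" using w0P finite_perms[of n] by simp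
        finally show ?thesis .
      qed
      have "Poly_Mapping.lookup (\<Sum>k\<in>?K. lconst (cf N n f k) * uhat N n k a) m
          = (\<Sum>k\<in>?K. if k = k0 then cf N n f k0 * of_int (sign w0) else 0)"
        unfolding rhs
      proof (intro sum.cong refl)
        fix k assume "k \<in> ?K"
        then show "cf N n f k * Poly_Mapping.lookup (uhat N n k a) m = (if k = k0 then cf N n f k0 * of_int (sign w0) else 0)"
          using other[of k] at0 by (auto simp: KK_def)
      qed
      also have "\<dots> = cf N n f k0 * of_int (sign w0)"
        using finite_KK[OF N, of n f] lk0 sk0 by (auto simp: KK_def)
      finally have r: "Poly_Mapping.lookup (\<Sum>k\<in>?K. lconst (cf N n f k) * uhat N n k a) m = cf N n f k0 * of_int (sign w0)" .
      have ek: "e i = k0 ! w0 i" if "i < n" for i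
      proof -
        have "el ! i = k0 ! w0 i" using w0(2) permute_list_nth[OF w0(1), of i] that lk0 by simp
        moreover have "el ! i = e i" using that by (simp add: el_def)
        ultimately show ?thesis by simp
      qed
      have a2: "a = permute_list w0 (Ak N n (\<lambda>i. k0 ! i))"
        using am Ak_cong[of n e "\<lambda>i. k0 ! w0 i" N] ek Ak_perm[OF w0p, of N "\<lambda>i. k0 ! i"] by simp
      have m2: "m = Poly_Mapping.map_key w0 (Mk N n (\<lambda>i. k0 ! i))"
        using am Mk_cong[of n e "\<lambda>i. k0 ! w0 i" N] ek Mk_perm[OF w0p, of N "\<lambda>i. k0 ! i"] by simp
      have "Poly_Mapping.lookup (f a) m = of_int (sign w0) * cf N n f k0"
        unfolding a2 m2 cf_def using perm_rel[OF an w0p] by (simp add: Ak_def)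
      then show ?thesis using r by simp
    qed
  qed
qed

lemma omega_sum:
  fixes omega :: "tens \<Rightarrow> lpoly" and c :: "int list \<Rightarrow> complex"
  assumes N: "N \<ge> 1"
    and omega_add: "\<And>f g. F_space N n f \<Longrightarrow> F_space N n g \<Longrightarrow> omega (\<lambda>a. f a + g a) = omega f + omega g"
    and omega_smult: "\<And>c f. F_space N n f \<Longrightarrow> omega (\<lambda>a. lconst c * f a) = lconst c * omega f"
    and omega_basis: "\<And>k. length k = n \<Longrightarrow> sorted_wrt (>) k \<Longrightarrow> omega (uhat N n k) = ahat n k"
    and fin: "finite K" and Kp: "\<forall>k\<in>K. length k = n \<and> sorted_wrt (>) k"
  shows "F_space N n (\<lambda>a. \<Sum>k\<in>K. lconst (c k) * uhat N n k a) \<and>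
         omega (\<lambda>a. \<Sum>k\<in>K. lconst (c k) * uhat N n k a) = om0 N n (\<lambda>a. \<Sum>k\<in>K. lconst (c k) * uhat N n k a)"
  using fin Kp
proof (induction K rule: finite_induct)
  case empty
  have z: "omega (\<lambda>a. 0) = 0"
    using omega_smult[OF F_space_zero, of 0] by (simp add: lconst_def)
  show ?case using z F_space_zero om0_zero by simp
next
  case (insert x K)
  let ?U = "\<lambda>a. lconst (c x) * uhat N n x a"
  let ?S = "\<lambda>a. \<Sum>k\<in>K. lconst (c k) * uhat N n k a"
  have Kp': "\<forall>k\<in>K. length k = n \<and> sorted_wrt (>) k" using insert.prems by simp
  have IH: "F_space N n ?S" "omega ?S = om0 N n ?S" using insert.IH[OF Kp'] by simp_all
  have xp: "length x = n" "sorted_wrt (>) x" using insert.prems by simp_all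
  have FU: "F_space N n ?U" by (rule F_space_smult[OF uhat_F[OF N]])
  have eq: "(\<lambda>a. \<Sum>k\<in>insert x K. lconst (c k) * uhat N n k a) = (\<lambda>a. ?U a + ?S a)"
    using insert.hyps by simp
  have "omega (\<lambda>a. ?U a + ?S a) = omega ?U + omega ?S" by (rule omega_add[OF FU IH(1)])
  also have "\<dots> = lconst (c x) * ahat n x + om0 N n ?S"
    using omega_smult[OF uhat_F[OF N], of "c x" x] omega_basis[OF xp] IH(2) by simp
  also have "\<dots> = om0 N n (\<lambda>a. ?U a + ?S a)"
    by (simp add: om0_add om0_smult om0_uhat[OF N])
  finally show ?case unfolding eq using F_space_add[OF FU IH(1)] by simp
qed

theorem lemma4:
  fixes N n b :: nat and omega :: "tens \<Rightarrow> lpoly" and f g :: tens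
  assumes "N \<ge> 1" and "n \<ge> 1" and "b \<ge> 1"
    and omega_add: "\<And>f g. F_space N n f \<Longrightarrow> F_space N n g \<Longrightarrow> omega (\<lambda>a. f a + g a) = omega f + omega g"
    and omega_smult: "\<And>c f. F_space N n f \<Longrightarrow> omega (\<lambda>a. lconst c * f a) = lconst c * omega f"
    and omega_basis: "\<And>k. length k = n \<Longrightarrow> sorted_wrt (>) k \<Longrightarrow> omega (uhat N n k) = ahat n k"
    and "F_space N n f" and "F_space N n g"
  shows "ip' N b n f g = ipp N b n (omega f) (omega g)"
proof -
  have N: "N \<ge> 1" by fact
  have om: "omega h = om0 N n h" if Fh: "F_space N n h" for h
  proof -
    have e: "h = (\<lambda>a. \<Sum>k\<in>KK N n h. lconst (cf N n h k) * uhat N n k a)"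
      using decomp[OF N Fh] by (intro ext) simp
    have kp: "\<forall>k\<in>KK N n h. length k = n \<and> sorted_wrt (>) k" by (simp add: KK_def)
    have "omega (\<lambda>a. \<Sum>k\<in>KK N n h. lconst (cf N n h k) * uhat N n k a) =
          om0 N n (\<lambda>a. \<Sum>k\<in>KK N n h. lconst (cf N n h k) * uhat N n k a)"
      using omega_sum[OF N omega_add omega_smult omega_basis finite_KK[OF N, of n h] kp, of "cf N n h"]
      by (rule conjunct2)
    then show ?thesis using e by simp
  qed
  have tf: "tens_space N n f" "tens_space N n g" using assms by (simp_all add: F_space_def)
  have "ip' N b n f g = (1 / fact n) * (\<Sum>a\<in>idx_tuples N n. Poly_Mapping.lookup (Dz b n * pstar (f a) * g a) 0)"
    by (rule ip'_alg[OF tf])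
  also have "\<dots> = ipp N b n (om0 N n f) (om0 N n g)"
    unfolding ipp_def alg_main[OF N] ..
  also have "\<dots> = ipp N b n (omega f) (omega g)"
    using om[OF \<open>F_space N n f\<close>] om[OF \<open>F_space N n g\<close>] by simp
  finally show ?thesis .
qed

end
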